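(* Let $f:[0,1]\times[0,1]\to\mathbb{R}$ be convex on the coordinates. Then \begin{align*} &\frac{1}{4}\int_0^1 \Big[f\Big(x,\tfrac{1}{4}\Big) + f\Big(x,\tfrac{3}{4}\Big)\Big]dx + \frac{1}{4}\int_0^1 \Big[f\Big(\tfrac{1}{4},y\Big) + f\Big(\tfrac{3}{4},y\Big)\Big]dy\\ &\leq \int_0^1\int_0^1 f(x, y)\,dx\,dy\\ &\leq \frac{1}{8}\int_0^1 \big[f(x,0) + f(x,1)\big]dx + \frac{1}{8}\int_0^1 \big[f(0,y) + f(1,y)\big]dy +\frac{1}{4}\int_0^1 f\Big(x,\tfrac{1}{2}\Big)dx+\frac{1}{4}\int_0^1 f\Big(\tfrac{1}{2},y\Big)dy. \end{align*}
   Context: A function $f:[a,b]\times[c,d]\to\mathbb{R}$ is called convex on the coordinates if for every $y\in[c,d]$ the partial map $u\mapsto f(u,y)$ is convex on $[a,b]$, and for every $x\in[a,b]$ the partial map $v\mapsto f(x,v)$ is convex on $[c,d]$. *)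

theory Defs
  imports "HOL-Analysis.Analysis"
begin

definition convex_on_coordinates ::
  "real \<Rightarrow> real \<Rightarrow> real \<Rightarrow> real \<Rightarrow> (real \<Rightarrow> real \<Rightarrow> real) \<Rightarrow> bool" where
  "convex_on_coordinates a b c d f \<longleftrightarrow>
     (\<forall>y\<in>{c..d}. convex_on {a..b} (\<lambda>u. f u y)) \<and>
     (\<forall>x\<in>{a..b}. convex_on {c..d} (\<lambda>v. f x v))"

end

theory Submission
  imports Defs
begin

lemma refl_int:
  fixes g :: "real \<Rightarrow> real"
  assumes "g integrable_on {a..b}" "a \<le> b"
  shows "((\<lambda>x. g (a + b - x)) has_integral integral {a..b} g) {a..b}"
proof -
  have h: "(g has_integral integral {a..b} g) (cbox a b)" using integrable_integral[OF assms(1)] by simp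
  from has_integral_affinity[OF h, of "-1" "a+b"]
  have "((\<lambda>x. g (- x + (a + b))) has_integral integral {a..b} g) ((\<lambda>x. (-1) * x + (a+b)) ` {a..b})"
    by simp
  moreover have "((\<lambda>x. (-1) * x + (a+b)) ` {a..b}) = {a..b}"
    using assms(2) by (subst image_affinity_atLeastAtMost) auto
  ultimately show ?thesis by (simp add: algebra_simps)
qed

lemma HH:
  fixes g :: "real \<Rightarrow> real"
  assumes c: "convex_on {a..b} g" and i: "g integrable_on {a..b}" and ab: "a < b"
  shows "(b - a) * g ((a+b)/2) \<le> integral {a..b} g"
    and "integral {a..b} g \<le> (b - a) * (g a + g b) / 2"
proof -
  have r: "((\<lambda>x. g (a + b - x)) has_integral integral {a..b} g) {a..b}"
    using refl_int[OF i] ab by simp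
  have s: "((\<lambda>x. g x + g (a + b - x)) has_integral 2 * integral {a..b} g) {a..b}"
    using has_integral_add[OF integrable_integral[OF i] r] by simp
  have lo: "2 * g ((a+b)/2) \<le> g x + g (a + b - x)" if "x \<in> {a..b}" for x
  proof -
    have "g ((1 - 1/2) *\<^sub>R x + (1/2) *\<^sub>R (a + b - x)) \<le> (1 - 1/2) * g x + (1/2) * g (a + b - x)"
      using that by (intro convex_onD[OF c]) auto
    hence "g (x/2 + (a+b-x)/2) \<le> g x / 2 + g (a+b-x) / 2" by simp
    moreover have "x/2 + (a+b-x)/2 = (a+b)/2" by (simp add: field_simps)
    ultimately have "g ((a+b)/2) \<le> g x / 2 + g (a+b-x) / 2" by metis
    thus ?thesis by simp
  qed
  have hi: "g x + g (a + b - x) \<le> g a + g b" if "x \<in> {a..b}" for x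
  proof -
    have 1: "g x \<le> (g b - g a) / (b - a) * (x - a) + g a"
      using convex_onD_Icc'[OF c that] by simp
    have 2: "g (a + b - x) \<le> (g b - g a) / (b - a) * (a + b - x - a) + g a"
      using convex_onD_Icc'[OF c, of "a+b-x"] that by simp
    have "(g b - g a) / (b - a) * (x - a) + (g b - g a) / (b - a) * (a + b - x - a) = g b - g a"
    proof -
      have "(g b - g a) / (b - a) * (x - a) + (g b - g a) / (b - a) * (a + b - x - a)
            = (g b - g a) / (b - a) * ((x - a) + (a + b - x - a))" by (simp only: distrib_left)
      also have "\<dots> = (g b - g a) / (b - a) * (b - a)" by simp
      also have "\<dots> = g b - g a" using ab by simp
      finally show ?thesis .
    qed
    with 1 2 show ?thesis by linarith
  qed
  have "((\<lambda>x. 2 * g ((a+b)/2)) has_integral (b - a) * (2 * g ((a+b)/2))) {a..b}"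
    using has_integral_const_real[of "2 * g ((a+b)/2)" a b] ab by simp
  from has_integral_le[OF this s] lo
  show "(b - a) * g ((a+b)/2) \<le> integral {a..b} g" by simp
  have "((\<lambda>x. g a + g b) has_integral (b - a) * (g a + g b)) {a..b}"
    using has_integral_const_real[of "g a + g b" a b] ab by simp
  from has_integral_le[OF s this] hi
  show "integral {a..b} g \<le> (b - a) * (g a + g b) / 2" by simp
qed

lemma conv_bounded:
  fixes g :: "real \<Rightarrow> real"
  assumes "convex_on {0..1} g" "x \<in> {0..1}"
  shows "\<bar>g x\<bar> \<le> \<bar>2 * g (1/2)\<bar> + \<bar>g 0\<bar> + \<bar>g 1\<bar>"
proof -
  have up: "g y \<le> \<bar>g 0\<bar> + \<bar>g 1\<bar>" if "y \<in> {0..1}" for y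
  proof -
    have "g ((1 - y) *\<^sub>R 0 + y *\<^sub>R 1) \<le> (1 - y) * g 0 + y * g 1"
      using that by (intro convex_onD[OF assms(1)]) auto
    moreover have "(1 - y) * g 0 \<le> \<bar>g 0\<bar>"
    proof -
      have "(1 - y) * g 0 \<le> (1 - y) * \<bar>g 0\<bar>" using that by (intro mult_left_mono) auto
      also have "\<dots> \<le> \<bar>g 0\<bar>" using that by (intro mult_left_le_one_le) auto
      finally show ?thesis .
    qed
    moreover have "y * g 1 \<le> \<bar>g 1\<bar>"
    proof -
      have "y * g 1 \<le> y * \<bar>g 1\<bar>" using that by (intro mult_left_mono) auto
      also have "\<dots> \<le> \<bar>g 1\<bar>" using that by (intro mult_left_le_one_le) auto
      finally show ?thesis .
    qed
    ultimately show ?thesis by simp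
  qed
  have "g ((1 - 1/2) *\<^sub>R x + (1/2) *\<^sub>R (1 - x)) \<le> (1 - 1/2) * g x + (1/2) * g (1 - x)"
    using assms(2) by (intro convex_onD[OF assms(1)]) auto
  hence "g (x/2 + (1-x)/2) \<le> g x / 2 + g (1-x) / 2" by simp
  moreover have "x/2 + (1-x)/2 = (1/2::real)" by (simp add: field_simps)
  ultimately have "g (1/2) \<le> g x / 2 + g (1-x) / 2" by metis
  moreover have "g (1 - x) \<le> \<bar>g 0\<bar> + \<bar>g 1\<bar>" using assms(2) by (intro up) auto
  moreover have "g x \<le> \<bar>g 0\<bar> + \<bar>g 1\<bar>" using assms(2) by (intro up) auto
  ultimately show ?thesis by linarith
qed

lemma conv_integrable:
  fixes g :: "real \<Rightarrow> real"
  assumes "convex_on {0..1} g"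
  shows "g integrable_on {0..1}"
proof -
  define B where "B = \<bar>2 * g (1/2)\<bar> + \<bar>g 0\<bar> + \<bar>g 1\<bar>"
  have "continuous_on {0<..<1} g"
    by (rule convex_on_continuous) (auto intro: convex_on_subset[OF assms])
  hence m: "g \<in> borel_measurable (lebesgue_on {0<..<1})"
    by (rule continuous_imp_measurable_on_sets_lebesgue) auto
  have "g integrable_on {0<..<1}"
  proof (rule measurable_bounded_by_integrable_imp_integrable_real[OF m])
    show "(\<lambda>_. B) integrable_on {0<..<(1::real)}"
      using integrable_const_ivl[of B 0 1] by (simp add: integrable_on_open_interval_real)
    show "\<bar>g x\<bar> \<le> B" if "x \<in> {0<..<1}" for x
      unfolding B_def using that by (intro conv_bounded[OF assms]) auto
  qed auto
  thus ?thesis by (simp add: integrable_on_open_interval_real)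
qed

lemma HH2:
  fixes g :: "real \<Rightarrow> real"
  assumes c: "convex_on {0..1} g"
  shows "(g (1/4) + g (3/4)) / 2 \<le> integral {0..1} g"
    and "integral {0..1} g \<le> (g 0 + g 1) / 4 + g (1/2) / 2"
proof -
  have i: "g integrable_on {0..1}" by (rule conv_integrable[OF c])
  have i1: "g integrable_on {0..1/2}" by (rule integrable_subinterval_real[OF i]) auto
  have i2: "g integrable_on {1/2..1}" by (rule integrable_subinterval_real[OF i]) auto
  have c1: "convex_on {0..1/2} g" by (rule convex_on_subset[OF c]) auto
  have c2: "convex_on {1/2..1} g" by (rule convex_on_subset[OF c]) auto
  have sp: "integral {0..1/2} g + integral {1/2..1} g = integral {0..1} g"
    by (rule Henstock_Kurzweil_Integration.integral_combine[OF _ _ i]) auto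
  note a1 = HH[OF c1 i1, simplified] and a2 = HH[OF c2 i2, simplified]
  have e1: "(0 + 1/2) / 2 = (1/4::real)" "(1/2 + 1) / 2 = (3/4::real)" by simp_all
  from a1(1) a2(1) sp show "(g (1/4) + g (3/4)) / 2 \<le> integral {0..1} g"
    by (simp add: e1)
  from a1(2) a2(2) sp have "4 * integral {0..1} g \<le> g 0 + g 1 + 2 * g (1/2)"
    by linarith
  thus "integral {0..1} g \<le> (g 0 + g 1) / 4 + g (1/2) / 2"
    by (simp add: field_simps)
qed

theorem corollary1:
  fixes f :: "real \<Rightarrow> real \<Rightarrow> real"
  assumes "convex_on_coordinates 0 1 0 1 f"
  shows "(1/4) * integral {0..1} (\<lambda>x. f x (1/4) + f x (3/4))
           + (1/4) * integral {0..1} (\<lambda>y. f (1/4) y + f (3/4) y)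
         \<le> integral {0..1} (\<lambda>y. integral {0..1} (\<lambda>x. f x y))
       \<and> integral {0..1} (\<lambda>y. integral {0..1} (\<lambda>x. f x y))
         \<le> (1/8) * integral {0..1} (\<lambda>x. f x 0 + f x 1)
           + (1/8) * integral {0..1} (\<lambda>y. f 0 y + f 1 y)
           + (1/4) * integral {0..1} (\<lambda>x. f x (1/2))
           + (1/4) * integral {0..1} (\<lambda>y. f (1/2) y)"
proof -
  have cy: "\<And>y. y \<in> {0..1} \<Longrightarrow> convex_on {0..1} (\<lambda>u. f u y)"
   and cx: "\<And>x. x \<in> {0..1} \<Longrightarrow> convex_on {0..1} (\<lambda>v. f x v)"
    using assms unfolding convex_on_coordinates_def by auto
  have iy: "\<And>y. y \<in> {0..1} \<Longrightarrow> (\<lambda>u. f u y) integrable_on {0..1}"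
    by (rule conv_integrable[OF cy])
  have ix: "\<And>x. x \<in> {0..1} \<Longrightarrow> (\<lambda>v. f x v) integrable_on {0..1}"
    by (rule conv_integrable[OF cx])
  define F where "F y = integral {0..1} (\<lambda>x. f x y)" for y
  have Fc: "convex_on {0..1} F"
  proof (rule convex_onI)
    fix t y1 y2 :: real
    assume t: "0 < t" "t < 1" and y: "y1 \<in> {0..1}" "y2 \<in> {0..1}"
    have ym: "(1 - t) *\<^sub>R y1 + t *\<^sub>R y2 \<in> {0..1}"
      using y t convex_real_interval(5)[of 0 1] unfolding convex_def
      by (metis less_eq_real_def add.commute diff_add_cancel diff_ge_0_iff_ge)
    have i1: "(\<lambda>x. (1 - t) * f x y1) integrable_on {0..1}"
      by (rule integrable_on_mult_right[OF iy[OF y(1)]])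
    have i2: "(\<lambda>x. t * f x y2) integrable_on {0..1}"
      by (rule integrable_on_mult_right[OF iy[OF y(2)]])
    have "F ((1 - t) *\<^sub>R y1 + t *\<^sub>R y2)
          \<le> integral {0..1} (\<lambda>x. (1 - t) * f x y1 + t * f x y2)"
      unfolding F_def
    proof (rule integral_le[OF iy[OF ym] integrable_add[OF i1 i2]])
      fix x :: real assume "x \<in> {0..1}"
      from convex_onD[OF cx[OF this], of t y1 y2] t y
      show "f x ((1 - t) *\<^sub>R y1 + t *\<^sub>R y2) \<le> (1 - t) * f x y1 + t * f x y2" by simp
    qed
    also have "\<dots> = (1 - t) * F y1 + t * F y2"
      unfolding F_def by (simp add: integral_add[OF i1 i2])
    finally show "F ((1 - t) *\<^sub>R y1 + t *\<^sub>R y2) \<le> (1 - t) * F y1 + t * F y2" .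
  qed (rule convex_real_interval)
  have Fi: "F integrable_on {0..1}" by (rule conv_integrable[OF Fc])
  note A = HH2[OF Fc]
  have q: "1/4 \<in> {0..1::real}" "3/4 \<in> {0..1::real}" "1/2 \<in> {0..1::real}"
    "0 \<in> {0..1::real}" "1 \<in> {0..1::real}" by auto
  have X1: "integral {0..1} (\<lambda>x. f x (1/4) + f x (3/4)) = F (1/4) + F (3/4)"
    unfolding F_def by (rule integral_add[OF iy[OF q(1)] iy[OF q(2)]])
  have X2: "integral {0..1} (\<lambda>x. f x 0 + f x 1) = F 0 + F 1"
    unfolding F_def by (rule integral_add[OF iy[OF q(4)] iy[OF q(5)]])
  have X3: "integral {0..1} (\<lambda>x. f x (1/2)) = F (1/2)" unfolding F_def ..
  have Y1: "(1/2) * integral {0..1} (\<lambda>y. f (1/4) y + f (3/4) y) \<le> integral {0..1} F"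
  proof -
    have j: "(\<lambda>y. f (1/4) y + f (3/4) y) integrable_on {0..1}"
      by (rule integrable_add[OF ix[OF q(1)] ix[OF q(2)]])
    have "integral {0..1} (\<lambda>y. (1/2) * (f (1/4) y + f (3/4) y)) \<le> integral {0..1} F"
    proof (rule integral_le[OF integrable_on_mult_right[OF j] Fi])
      fix y :: real assume "y \<in> {0..1}"
      from HH2(1)[OF cy[OF this]] show "(1/2) * (f (1/4) y + f (3/4) y) \<le> F y"
        unfolding F_def by simp
    qed
    thus ?thesis by simp
  qed
  have Y2: "integral {0..1} F \<le> (1/4) * integral {0..1} (\<lambda>y. f 0 y + f 1 y)
                + (1/2) * integral {0..1} (\<lambda>y. f (1/2) y)"
  proof -
    have j: "(\<lambda>y. f 0 y + f 1 y) integrable_on {0..1}"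
      by (rule integrable_add[OF ix[OF q(4)] ix[OF q(5)]])
    have j2: "(\<lambda>y. f (1/2) y) integrable_on {0..1}" by (rule ix[OF q(3)])
    have "integral {0..1} F \<le> integral {0..1} (\<lambda>y. (1/4) * (f 0 y + f 1 y) + (1/2) * f (1/2) y)"
    proof (rule integral_le[OF Fi integrable_add[OF integrable_on_mult_right[OF j] integrable_on_mult_right[OF j2]]])
      fix y :: real assume "y \<in> {0..1}"
      from HH2(2)[OF cy[OF this]] show "F y \<le> (1/4) * (f 0 y + f 1 y) + (1/2) * f (1/2) y"
        unfolding F_def by simp
    qed
    also have "\<dots> = (1/4) * integral {0..1} (\<lambda>y. f 0 y + f 1 y)
                + (1/2) * integral {0..1} (\<lambda>y. f (1/2) y)"
      by (subst integral_add[OF integrable_on_mult_right[OF j] integrable_on_mult_right[OF j2]])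
         (simp only: integral_mult_right)
    finally show ?thesis .
  qed
  have FF: "integral {0..1} (\<lambda>y. integral {0..1} (\<lambda>x. f x y)) = integral {0..1} F"
    unfolding F_def ..
  show ?thesis unfolding FF X1 X2 X3 using A Y1 Y2 by linarith
qed

end
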